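(* Let $\pi$ be a positive (smooth) density on $\mathbb{R}^d$ and $\alpha,\beta>0$. Consider $$\text{(HK-KL)}\quad \dot\mu=\alpha\,\mathrm{div}\Big(\nabla\mu-\tfrac{\mu}{\pi}\nabla\pi\Big)-\beta\mu\log\Big(\tfrac{\mu}{\pi}\Big),$$ $$\text{(SHK-KL)}\quad \dot\rho=\alpha\,\mathrm{div}\Big(\nabla\rho-\tfrac{\rho}{\pi}\nabla\pi\Big)-\beta\rho\Big(\log\Big(\tfrac{\rho}{\pi}\Big)-\int_{\mathbb{R}^d}\rho\log\Big(\tfrac{\rho}{\pi}\Big)dx\Big).$$ (i) If $t\mapsto\mu(t)$ solves (HK-KL), then $t\mapsto\rho(t)=\frac{1}{z(t)}\mu(t)$ with $z(t)=\int_{\mathbb{R}^d}\mu(t,x)\,dx>0$ solves (SHK-KL), and $z$ satisfies the mass equation $$\dot z=-\beta z\log z-\beta z\int_{\mathbb{R}^d}\rho\log\Big(\tfrac{\rho}{\pi}\Big)dx.\qquad(\text{Mass-HK})$$ (ii) Conversely, if $t\mapsto\rho(t)$ (probability densities) solves (SHK-KL) and $\kappa$ is a positive solution of (Mass-HK) (with $z$ replaced by $\kappa$ and this $\rho$), then $t\mapsto\mu(t)=\kappa(t)\rho(t)$ solves (HK-KL); here $\kappa$ does not depend on $x$.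
   Context: Solutions are understood as classical solutions with sufficient decay at infinity so that integrals over $\mathbb{R}^d$ of the divergence terms vanish. (HK-KL) and (SHK-KL) are the Hellinger-Kantorovich and spherical Hellinger-Kantorovich gradient-flow equations of the KL divergence $\mathrm{D}_{\mathrm{KL}}(\cdot|\pi)$. *)

theory Defs
  imports "HOL-Analysis.Analysis"
begin

text \<open>Space variable x ranges over an arbitrary Euclidean space 'a (playing the role of R^d,
  d = DIM('a)); time t ranges over an open set T of reals; integrals are Lebesgue integrals
  with respect to Lebesgue measure lborel.\<close>

definition grad :: "('a::euclidean_space \<Rightarrow> real) \<Rightarrow> 'a \<Rightarrow> 'a" where
  "grad f x = (\<Sum>i\<in>Basis. frechet_derivative f (at x) i *\<^sub>R i)"

definition divergence :: "('a::euclidean_space \<Rightarrow> 'a) \<Rightarrow> 'a \<Rightarrow> real" where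
  "divergence F x = (\<Sum>i\<in>Basis. frechet_derivative F (at x) i \<bullet> i)"

definition twice_diff :: "('a::euclidean_space \<Rightarrow> real) \<Rightarrow> bool" where
  "twice_diff f \<longleftrightarrow> (\<forall>x. f differentiable (at x)) \<and> (\<forall>x. grad f differentiable (at x))"

definition flux :: "('a::euclidean_space \<Rightarrow> real) \<Rightarrow> ('a \<Rightarrow> real) \<Rightarrow> 'a \<Rightarrow> 'a" where
  "flux p f x = grad f x - (f x / p x) *\<^sub>R grad p x"

definition relent :: "('a::euclidean_space \<Rightarrow> real) \<Rightarrow> ('a \<Rightarrow> real) \<Rightarrow> real" where
  "relent p f = (\<integral>x. f x * ln (f x / p x) \<partial>lborel)"

definition HK_rhs :: "real \<Rightarrow> real \<Rightarrow> ('a::euclidean_space \<Rightarrow> real) \<Rightarrow> ('a \<Rightarrow> real) \<Rightarrow> 'a \<Rightarrow> real" where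
  "HK_rhs \<alpha> \<beta> p f x = \<alpha> * divergence (flux p f) x - \<beta> * f x * ln (f x / p x)"

definition SHK_rhs :: "real \<Rightarrow> real \<Rightarrow> ('a::euclidean_space \<Rightarrow> real) \<Rightarrow> ('a \<Rightarrow> real) \<Rightarrow> 'a \<Rightarrow> real" where
  "SHK_rhs \<alpha> \<beta> p f x = \<alpha> * divergence (flux p f) x - \<beta> * f x * (ln (f x / p x) - relent p f)"

definition solves_HK :: "real \<Rightarrow> real \<Rightarrow> ('a::euclidean_space \<Rightarrow> real) \<Rightarrow> real set \<Rightarrow> (real \<Rightarrow> 'a \<Rightarrow> real) \<Rightarrow> bool" where
  "solves_HK \<alpha> \<beta> p T \<mu> \<longleftrightarrow> (\<forall>t\<in>T. twice_diff (\<mu> t)) \<and>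
     (\<forall>t\<in>T. \<forall>x. ((\<lambda>s. \<mu> s x) has_real_derivative HK_rhs \<alpha> \<beta> p (\<mu> t) x) (at t))"

definition solves_SHK :: "real \<Rightarrow> real \<Rightarrow> ('a::euclidean_space \<Rightarrow> real) \<Rightarrow> real set \<Rightarrow> (real \<Rightarrow> 'a \<Rightarrow> real) \<Rightarrow> bool" where
  "solves_SHK \<alpha> \<beta> p T \<rho> \<longleftrightarrow> (\<forall>t\<in>T. twice_diff (\<rho> t)) \<and>
     (\<forall>t\<in>T. \<forall>x. ((\<lambda>s. \<rho> s x) has_real_derivative SHK_rhs \<alpha> \<beta> p (\<rho> t) x) (at t))"

definition solves_mass :: "real \<Rightarrow> ('a::euclidean_space \<Rightarrow> real) \<Rightarrow> real set \<Rightarrow> (real \<Rightarrow> 'a \<Rightarrow> real) \<Rightarrow> (real \<Rightarrow> real) \<Rightarrow> bool" where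
  "solves_mass \<beta> p T \<rho> z \<longleftrightarrow>
     (\<forall>t\<in>T. (z has_real_derivative (- \<beta> * z t * ln (z t) - \<beta> * z t * relent p (\<rho> t))) (at t))"

end

theory Submission
  imports Defs
begin

lemma field_aux: "(z::real) > 0 \<Longrightarrow> a = (1 / z) * E - (l / z) * z \<Longrightarrow> a = E / z - l"
  by simp

lemma alg1: "(z::real) > 0 \<Longrightarrow> ((\<alpha>*D - \<beta>*m*L) * z - m * (-\<beta>*E)) / (z*z) = \<alpha> * ((1/z) * D) - \<beta> * (m/z) * ((L - lz) - (E/z - lz))"
  by (simp add: field_simps power2_eq_square)
lemma alg2: "(z::real) > 0 \<Longrightarrow> -\<beta>*z*lz - \<beta>*z*(E/z - lz) = -\<beta>*E"
  by (simp add: field_simps)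
lemma alg3: "(-\<beta>*k*lk - \<beta>*k*R)*r + (\<alpha>*D - \<beta>*r*(Lr - R))*k = \<alpha>*(k*D) - \<beta>*(k*r)*(lk + Lr)" for k::real
  by (simp add: algebra_simps)

lemma mvt_bound:
  fixes F F' :: "real \<Rightarrow> real"
  assumes der: "\<And>s. \<bar>s - t\<bar> < e \<Longrightarrow> (F has_real_derivative F' s) (at s)"
    and bd: "\<And>s. \<bar>s - t\<bar> < e \<Longrightarrow> \<bar>F' s\<bar> \<le> G"
    and s: "\<bar>s - t\<bar> < e" "s \<noteq> t"
  shows "\<bar>(F s - F t) / (s - t)\<bar> \<le> G"
proof (cases "s < t")
  case True
  obtain z where z: "s < z" "z < t" "F t - F s = (t - s) * F' z"
    using MVT2[OF True, of F F'] der s by (metis abs_le_D1 abs_minus_commute abs_of_nonneg dual_order.trans diff_ge_0_iff_ge le_less_trans linorder_not_le neg_le_iff_le abs_le_iff minus_diff_eq diff_mono order_refl)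
  have "(F s - F t) / (s - t) = F' z" using z True by (simp add: field_simps)
  moreover have "\<bar>z - t\<bar> < e" using z s True by auto
  ultimately show ?thesis using bd by simp
next
  case False
  then have st: "t < s" using s by auto
  obtain z where z: "t < z" "z < s" "F s - F t = (s - t) * F' z"
    using MVT2[OF st, of F F'] der s by (smt (verit))
  have "(F s - F t) / (s - t) = F' z" using z st by (simp add: field_simps)
  moreover have "\<bar>z - t\<bar> < e" using z s st by auto
  ultimately show ?thesis using bd by simp
qed

lemma deriv_integral:
  fixes F F' :: "real \<Rightarrow> 'a \<Rightarrow> real" and M :: "'a measure"
  assumes e: "e > 0"
    and meas: "\<And>s. \<bar>s - t\<bar> < e \<Longrightarrow> integrable M (F s)"
    and fm: "F' t \<in> borel_measurable M"
    and g: "integrable M g"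
    and der: "\<And>s x. \<bar>s - t\<bar> < e \<Longrightarrow> ((\<lambda>r. F r x) has_real_derivative F' s x) (at s)"
    and bd: "\<And>s x. \<bar>s - t\<bar> < e \<Longrightarrow> \<bar>F' s x\<bar> \<le> g x"
  shows "((\<lambda>s. integral\<^sup>L M (F s)) has_real_derivative integral\<^sup>L M (F' t)) (at t)"
  unfolding has_field_derivative_iff tendsto_at_iff_sequentially
proof (intro allI impI)
  fix X :: "nat \<Rightarrow> real"
  assume X: "\<forall>i. X i \<in> UNIV - {t}" and Xt: "X \<longlonglongrightarrow> t"
  from Xt e have "eventually (\<lambda>n. dist (X n) t < e) sequentially"
    by (simp add: tendsto_iff)
  then obtain N where N: "\<And>n. n \<ge> N \<Longrightarrow> \<bar>X n - t\<bar> < e"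
    by (auto simp: eventually_sequentially dist_real_def)
  define q where "q n x = (F (X (n + N)) x - F t x) / (X (n + N) - t)" for n x
  have int_eq: "integral\<^sup>L M (q n) = (integral\<^sup>L M (F (X (n + N))) - integral\<^sup>L M (F t)) / (X (n + N) - t)" for n
  proof -
    have "integral\<^sup>L M (q n) = integral\<^sup>L M (\<lambda>x. F (X (n + N)) x - F t x) / (X (n + N) - t)"
      unfolding q_def by simp
    also have "\<dots> = (integral\<^sup>L M (F (X (n + N))) - integral\<^sup>L M (F t)) / (X (n + N) - t)"
    proof -
      have "integrable M (F (X (n + N)))" "integrable M (F t)"
        using meas[of "X (n+N)"] meas[of t] N[of "n+N"] e by auto
      then show ?thesis by (simp add: integral_diff)
    qed
    finally show ?thesis .
  qed
  have "(\<lambda>n. integral\<^sup>L M (q n)) \<longlonglongrightarrow> integral\<^sup>L M (F' t)"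
  proof (rule integral_dominated_convergence[where w=g])
    show "F' t \<in> borel_measurable M" by (rule fm)
    show "q n \<in> borel_measurable M" for n
      using meas[of "X (n+N)"] meas[of t] N[of "n+N"] e unfolding q_def by auto
    show "integrable M g" by (rule g)
    show "AE x in M. (\<lambda>n. q n x) \<longlonglongrightarrow> F' t x"
    proof (rule AE_I2)
      fix x
      have "((\<lambda>y. (F y x - F t x) / (y - t)) \<longlongrightarrow> F' t x) (at t)"
        using der[of t x] e by (simp add: has_field_derivative_iff)
      then have "((\<lambda>y. (F y x - F t x) / (y - t)) \<circ> X) \<longlonglongrightarrow> F' t x"
        using X Xt unfolding tendsto_at_iff_sequentially by blast
      then have "(\<lambda>n. ((\<lambda>y. (F y x - F t x) / (y - t)) \<circ> X) (n + N)) \<longlonglongrightarrow> F' t x"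
        by (rule LIMSEQ_ignore_initial_segment)
      then show "(\<lambda>n. q n x) \<longlonglongrightarrow> F' t x" by (simp add: q_def o_def)
    qed
    show "AE x in M. norm (q n x) \<le> g x" for n
    proof (rule AE_I2)
      fix x
      show "norm (q n x) \<le> g x"
        unfolding q_def real_norm_def
        by (rule mvt_bound[where e=e and F'="\<lambda>s. F' s x"]) (use der bd N X in auto)
    qed
  qed
  then have "(\<lambda>n. ((\<lambda>y. (integral\<^sup>L M (F y) - integral\<^sup>L M (F t)) / (y - t)) \<circ> X) (n + N)) \<longlonglongrightarrow> integral\<^sup>L M (F' t)"
    by (simp add: int_eq o_def)
  then show "((\<lambda>y. (integral\<^sup>L M (F y) - integral\<^sup>L M (F t)) / (y - t)) \<circ> X) \<longlonglongrightarrow> integral\<^sup>L M (F' t)"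
    by (rule LIMSEQ_offset)
qed

lemma grad_scale:
  fixes f :: "'a::euclidean_space \<Rightarrow> real"
  assumes "\<forall>x. f differentiable (at x)"
  shows "grad (\<lambda>x. c * f x) = (\<lambda>x. c *\<^sub>R grad f x)"
proof
  fix x
  have "(f has_derivative frechet_derivative f (at x)) (at x)"
    using assms frechet_derivative_works by blast
  then have "((\<lambda>x. c * f x) has_derivative (\<lambda>h. c * frechet_derivative f (at x) h)) (at x)"
    by (rule has_derivative_mult_right)
  then have "frechet_derivative (\<lambda>x. c * f x) (at x) = (\<lambda>h. c * frechet_derivative f (at x) h)"
    by (rule frechet_derivative_at[symmetric])
  then show "grad (\<lambda>x. c * f x) x = c *\<^sub>R grad f x"
    by (simp add: grad_def scaleR_sum_right)
qed

lemma div_scale: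
  fixes F :: "'a::euclidean_space \<Rightarrow> 'a"
  assumes "\<forall>x. F differentiable (at x)"
  shows "divergence (\<lambda>x. c *\<^sub>R F x) = (\<lambda>x. c * divergence F x)"
proof
  fix x
  have "(F has_derivative frechet_derivative F (at x)) (at x)"
    using assms frechet_derivative_works by blast
  then have "((\<lambda>x. c *\<^sub>R F x) has_derivative (\<lambda>h. c *\<^sub>R frechet_derivative F (at x) h)) (at x)"
    by (rule has_derivative_scaleR_right)
  then have "frechet_derivative (\<lambda>x. c *\<^sub>R F x) (at x) = (\<lambda>h. c *\<^sub>R frechet_derivative F (at x) h)"
    by (rule frechet_derivative_at[symmetric])
  then show "divergence (\<lambda>x. c *\<^sub>R F x) x = c * divergence F x"
    by (simp add: divergence_def sum_distrib_left)
qed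

lemma twice_diff_scale:
  fixes f :: "'a::euclidean_space \<Rightarrow> real"
  assumes "twice_diff f"
  shows "twice_diff (\<lambda>x. c * f x)"
  using assms unfolding twice_diff_def
  by (simp add: grad_scale)

lemma flux_scale:
  fixes f :: "'a::euclidean_space \<Rightarrow> real"
  assumes "twice_diff f"
  shows "flux p (\<lambda>x. c * f x) = (\<lambda>x. c *\<^sub>R flux p f x)"
  using assms unfolding twice_diff_def
  by (simp add: grad_scale flux_def fun_eq_iff algebra_simps)

lemma flux_diff:
  fixes f :: "'a::euclidean_space \<Rightarrow> real"
  assumes "twice_diff f" "twice_diff p" "\<forall>x. p x > 0"
  shows "\<forall>x. flux p f differentiable (at x)"
proof
  fix x
  have "(\<lambda>x. grad f x - (f x / p x) *\<^sub>R grad p x) differentiable (at x)"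
    using assms unfolding twice_diff_def
    by (intro differentiable_diff differentiable_scaleR differentiable_divide) (auto simp: less_imp_neq[symmetric])
  then show "flux p f differentiable (at x)"
    unfolding flux_def[abs_def] .
qed

lemma div_flux_scale:
  fixes f :: "'a::euclidean_space \<Rightarrow> real"
  assumes "twice_diff f" "twice_diff p" "\<forall>x. p x > 0"
  shows "divergence (flux p (\<lambda>x. c * f x)) x = c * divergence (flux p f) x"
  using flux_scale[OF assms(1)] div_scale[OF flux_diff[OF assms]] by simp

lemma integral_pos:
  fixes f :: "'a::euclidean_space \<Rightarrow> real"
  assumes "integrable lborel f" "\<forall>x. f x > 0"
  shows "integral\<^sup>L lborel f > 0"
proof -
  have ge: "integral\<^sup>L lborel f \<ge> 0"
    using assms by (intro integral_nonneg_AE) (auto intro: less_imp_le)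
  have "integral\<^sup>L lborel f \<noteq> 0"
  proof
    assume "integral\<^sup>L lborel f = 0"
    then have "AE x in lborel. f x = 0"
      using integral_nonneg_eq_0_iff_AE[OF assms(1)] assms(2) by (auto intro: less_imp_le)
    then have "AE x in (lborel::'a measure). False" 
    proof (rule eventually_mono)
      show "f x = 0 \<Longrightarrow> False" for x using assms(2) by (metis less_irrefl)
    qed
    then have "ae_filter (lborel::'a measure) = bot" using trivial_limit_def by blast
    then show False unfolding ae_filter_eq_bot_iff by simp
  qed
  then show ?thesis using ge by simp
qed

theorem mainTheorem14:
  fixes \<pi> :: "'a::euclidean_space \<Rightarrow> real" and \<alpha> \<beta> :: real and T :: "real set"
  assumes pi_pos: "\<forall>x. \<pi> x > 0" and pi_reg: "twice_diff \<pi>"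
    and \<alpha>_pos: "\<alpha> > 0" and \<beta>_pos: "\<beta> > 0"
    and T_open: "open T"
  shows
    "(\<forall>\<mu> :: real \<Rightarrow> 'a \<Rightarrow> real.
        solves_HK \<alpha> \<beta> \<pi> T \<mu>
      \<and> (\<forall>t\<in>T. \<forall>x. \<mu> t x > 0)
      \<and> (\<forall>t\<in>T. integrable lborel (\<mu> t)
               \<and> integrable lborel (\<lambda>x. \<mu> t x * ln (\<mu> t x / \<pi> x))
               \<and> integrable lborel (divergence (flux \<pi> (\<mu> t)))
               \<and> (\<integral>x. divergence (flux \<pi> (\<mu> t)) x \<partial>lborel) = 0)
      \<and> (\<forall>t\<in>T. \<exists>e>0. \<exists>g. integrable lborel g \<and>
               (\<forall>s. \<bar>s - t\<bar> < e \<longrightarrow> s \<in> T \<and> (\<forall>x. \<bar>HK_rhs \<alpha> \<beta> \<pi> (\<mu> s) x\<bar> \<le> g x)))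
      \<longrightarrow> (let z = (\<lambda>t. \<integral>x. \<mu> t x \<partial>lborel); \<rho> = (\<lambda>t x. \<mu> t x / z t) in
            (\<forall>t\<in>T. z t > 0) \<and> solves_SHK \<alpha> \<beta> \<pi> T \<rho> \<and> solves_mass \<beta> \<pi> T \<rho> z))
   \<and>
    (\<forall>(\<rho> :: real \<Rightarrow> 'a \<Rightarrow> real) (\<kappa> :: real \<Rightarrow> real).
        solves_SHK \<alpha> \<beta> \<pi> T \<rho>
      \<and> (\<forall>t\<in>T. (\<forall>x. \<rho> t x > 0) \<and> integrable lborel (\<rho> t) \<and> (\<integral>x. \<rho> t x \<partial>lborel) = 1)
      \<and> (\<forall>t\<in>T. \<kappa> t > 0) \<and> solves_mass \<beta> \<pi> T \<rho> \<kappa>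
      \<longrightarrow> solves_HK \<alpha> \<beta> \<pi> T (\<lambda>t x. \<kappa> t * \<rho> t x))"
proof (intro conjI allI impI)
  fix \<mu> :: "real \<Rightarrow> 'a \<Rightarrow> real"
  assume H: "solves_HK \<alpha> \<beta> \<pi> T \<mu>
      \<and> (\<forall>t\<in>T. \<forall>x. \<mu> t x > 0)
      \<and> (\<forall>t\<in>T. integrable lborel (\<mu> t)
               \<and> integrable lborel (\<lambda>x. \<mu> t x * ln (\<mu> t x / \<pi> x))
               \<and> integrable lborel (divergence (flux \<pi> (\<mu> t)))
               \<and> (\<integral>x. divergence (flux \<pi> (\<mu> t)) x \<partial>lborel) = 0)
      \<and> (\<forall>t\<in>T. \<exists>e>0. \<exists>g. integrable lborel g \<and>
               (\<forall>s. \<bar>s - t\<bar> < e \<longrightarrow> s \<in> T \<and> (\<forall>x. \<bar>HK_rhs \<alpha> \<beta> \<pi> (\<mu> s) x\<bar> \<le> g x)))"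
  then have S: "solves_HK \<alpha> \<beta> \<pi> T \<mu>" and mpos: "\<And>t x. t \<in> T \<Longrightarrow> \<mu> t x > 0"
    and imu: "\<And>t. t \<in> T \<Longrightarrow> integrable lborel (\<mu> t)"
    and iE: "\<And>t. t \<in> T \<Longrightarrow> integrable lborel (\<lambda>x. \<mu> t x * ln (\<mu> t x / \<pi> x))"
    and idv: "\<And>t. t \<in> T \<Longrightarrow> integrable lborel (divergence (flux \<pi> (\<mu> t)))"
    and zdv: "\<And>t. t \<in> T \<Longrightarrow> (\<integral>x. divergence (flux \<pi> (\<mu> t)) x \<partial>lborel) = 0"
    and dom: "\<And>t. t \<in> T \<Longrightarrow> \<exists>e>0. \<exists>g. integrable lborel g \<and>
               (\<forall>s. \<bar>s - t\<bar> < e \<longrightarrow> s \<in> T \<and> (\<forall>x. \<bar>HK_rhs \<alpha> \<beta> \<pi> (\<mu> s) x\<bar> \<le> g x))"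
    by auto
  have td: "\<And>t. t \<in> T \<Longrightarrow> twice_diff (\<mu> t)" using S unfolding solves_HK_def by auto
  have dmu: "\<And>t x. t \<in> T \<Longrightarrow> ((\<lambda>s. \<mu> s x) has_real_derivative HK_rhs \<alpha> \<beta> \<pi> (\<mu> t) x) (at t)"
    using S unfolding solves_HK_def by auto
  define z where "z = (\<lambda>t. \<integral>x. \<mu> t x \<partial>lborel)"
  define E where "E = (\<lambda>t. \<integral>x. \<mu> t x * ln (\<mu> t x / \<pi> x) \<partial>lborel)"
  have zpos: "\<And>t. t \<in> T \<Longrightarrow> z t > 0"
    unfolding z_def using imu mpos by (intro integral_pos) auto
  have HKeq: "\<And>t. HK_rhs \<alpha> \<beta> \<pi> (\<mu> t) = (\<lambda>x. \<alpha> * divergence (flux \<pi> (\<mu> t)) x - \<beta> * (\<mu> t x * ln (\<mu> t x / \<pi> x)))"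
    by (simp add: HK_rhs_def fun_eq_iff mult.assoc)
  have dz: "(z has_real_derivative - \<beta> * E t) (at t)" if t: "t \<in> T" for t
  proof -
    obtain e g where e: "e > 0" and g: "integrable lborel g"
      and eg: "\<And>s. \<bar>s - t\<bar> < e \<Longrightarrow> s \<in> T \<and> (\<forall>x. \<bar>HK_rhs \<alpha> \<beta> \<pi> (\<mu> s) x\<bar> \<le> g x)"
      using dom[OF t] by blast
    have iH: "integrable lborel (HK_rhs \<alpha> \<beta> \<pi> (\<mu> t))"
      unfolding HKeq using idv[OF t] iE[OF t] by auto
    have "(z has_real_derivative integral\<^sup>L lborel (HK_rhs \<alpha> \<beta> \<pi> (\<mu> t))) (at t)"
      unfolding z_def
      by (rule deriv_integral[where e=e and g=g]) (use e g eg imu iH dmu in auto)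
    moreover have "integral\<^sup>L lborel (HK_rhs \<alpha> \<beta> \<pi> (\<mu> t)) = - \<beta> * E t"
      unfolding HKeq E_def using idv[OF t] iE[OF t] zdv[OF t] by simp
    ultimately show ?thesis by simp
  qed
  have rel: "relent \<pi> (\<lambda>x. \<mu> t x / z t) = E t / z t - ln (z t)" if t: "t \<in> T" for t
  proof -
    have pw: "(\<lambda>x. \<mu> t x / z t * ln (\<mu> t x / z t / \<pi> x)) =
        (\<lambda>x. (1 / z t) * (\<mu> t x * ln (\<mu> t x / \<pi> x)) - (ln (z t) / z t) * \<mu> t x)"
    proof
      fix x
      have "ln (\<mu> t x / z t / \<pi> x) = ln (\<mu> t x / \<pi> x) - ln (z t)"
        using mpos[OF t, of x] zpos[OF t] pi_pos
        by (simp add: ln_divide_pos[symmetric] divide_divide_eq_left mult.commute)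
      then show "\<mu> t x / z t * ln (\<mu> t x / z t / \<pi> x) =
          (1 / z t) * (\<mu> t x * ln (\<mu> t x / \<pi> x)) - (ln (z t) / z t) * \<mu> t x"
        by (simp only:) (simp add: diff_divide_distrib right_diff_distrib)
    qed
    have "relent \<pi> (\<lambda>x. \<mu> t x / z t) = (1 / z t) * E t - (ln (z t) / z t) * z t"
    proof -
      have "relent \<pi> (\<lambda>x. \<mu> t x / z t) = integral\<^sup>L lborel (\<lambda>x. \<mu> t x / z t * ln (\<mu> t x / z t / \<pi> x))"
        by (simp only: relent_def)
      also have "\<dots> = integral\<^sup>L lborel (\<lambda>x. (1 / z t) * (\<mu> t x * ln (\<mu> t x / \<pi> x)) - (ln (z t) / z t) * \<mu> t x)"
        by (rule arg_cong[where f="integral\<^sup>L lborel", OF pw])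
      also have "\<dots> = integral\<^sup>L lborel (\<lambda>x. (1 / z t) * (\<mu> t x * ln (\<mu> t x / \<pi> x))) - integral\<^sup>L lborel (\<lambda>x. (ln (z t) / z t) * \<mu> t x)"
        by (rule Bochner_Integration.integral_diff) (use iE[OF t] imu[OF t] in simp_all)
      also have "\<dots> = (1 / z t) * E t - (ln (z t) / z t) * z t"
        unfolding E_def z_def by (simp only: integral_mult_right_zero)
      finally show ?thesis .
    qed
    then show ?thesis by (rule field_aux[OF zpos[OF t]])
  qed
  show "let z = (\<lambda>t. \<integral>x. \<mu> t x \<partial>lborel); \<rho> = (\<lambda>t x. \<mu> t x / z t) in
            (\<forall>t\<in>T. z t > 0) \<and> solves_SHK \<alpha> \<beta> \<pi> T \<rho> \<and> solves_mass \<beta> \<pi> T \<rho> z"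
    unfolding Let_def z_def[symmetric]
  proof (intro conjI)
    show "\<forall>t\<in>T. z t > 0" using zpos by auto
    show "solves_mass \<beta> \<pi> T (\<lambda>t x. \<mu> t x / z t) z"
      unfolding solves_mass_def
    proof
      fix t assume t: "t \<in> T"
      have "- \<beta> * z t * ln (z t) - \<beta> * z t * relent \<pi> (\<lambda>x. \<mu> t x / z t) = - \<beta> * E t"
        unfolding rel[OF t] by (rule alg2[OF zpos[OF t]])
      then show "(z has_real_derivative - \<beta> * z t * ln (z t) - \<beta> * z t * relent \<pi> (\<lambda>x. \<mu> t x / z t)) (at t)"
        using dz[OF t] by simp
    qed
    show "solves_SHK \<alpha> \<beta> \<pi> T (\<lambda>t x. \<mu> t x / z t)"
      unfolding solves_SHK_def
    proof (intro conjI ballI allI)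
      fix t assume t: "t \<in> T"
      have fe: "(\<lambda>x. \<mu> t x / z t) = (\<lambda>x. (1 / z t) * \<mu> t x)" by auto
      show "twice_diff (\<lambda>x. \<mu> t x / z t)" unfolding fe using twice_diff_scale[OF td[OF t]] .
    next
      fix t x assume t: "t \<in> T"
      have fe: "(\<lambda>x. \<mu> t x / z t) = (\<lambda>x. (1 / z t) * \<mu> t x)" by auto
      have d: "((\<lambda>s. \<mu> s x / z s) has_real_derivative
          (HK_rhs \<alpha> \<beta> \<pi> (\<mu> t) x * z t - \<mu> t x * (- \<beta> * E t)) / (z t * z t)) (at t)"
        using DERIV_divide[OF dmu[OF t] dz[OF t]] zpos[OF t] by simp
      have ln2: "ln (\<mu> t x / z t / \<pi> x) = ln (\<mu> t x / \<pi> x) - ln (z t)"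
        using mpos[OF t, of x] zpos[OF t] pi_pos
        by (simp add: ln_divide_pos[symmetric] divide_divide_eq_left mult.commute)
      have s1: "SHK_rhs \<alpha> \<beta> \<pi> (\<lambda>x. \<mu> t x / z t) x = \<alpha> * divergence (flux \<pi> (\<lambda>x. \<mu> t x / z t)) x
          - \<beta> * (\<mu> t x / z t) * (ln (\<mu> t x / z t / \<pi> x) - relent \<pi> (\<lambda>x. \<mu> t x / z t))"
        by (simp only: SHK_rhs_def)
      have s2: "divergence (flux \<pi> (\<lambda>x. \<mu> t x / z t)) x = (1 / z t) * divergence (flux \<pi> (\<mu> t)) x"
        unfolding fe by (rule div_flux_scale[OF td[OF t] pi_reg pi_pos])
      have h1: "HK_rhs \<alpha> \<beta> \<pi> (\<mu> t) x = \<alpha> * divergence (flux \<pi> (\<mu> t)) x - \<beta> * \<mu> t x * ln (\<mu> t x / \<pi> x)"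
        by (simp only: HK_rhs_def)
      have eq: "(HK_rhs \<alpha> \<beta> \<pi> (\<mu> t) x * z t - \<mu> t x * (- \<beta> * E t)) / (z t * z t)
          = SHK_rhs \<alpha> \<beta> \<pi> (\<lambda>x. \<mu> t x / z t) x"
        unfolding s1 s2 h1 ln2 rel[OF t] by (rule alg1[OF zpos[OF t]])
      show "((\<lambda>s. \<mu> s x / z s) has_real_derivative SHK_rhs \<alpha> \<beta> \<pi> (\<lambda>x. \<mu> t x / z t) x) (at t)"
        using d unfolding eq .
    qed
  qed
next

  fix \<rho> :: "real \<Rightarrow> 'a \<Rightarrow> real" and \<kappa> :: "real \<Rightarrow> real"
  assume H: "solves_SHK \<alpha> \<beta> \<pi> T \<rho>
      \<and> (\<forall>t\<in>T. (\<forall>x. \<rho> t x > 0) \<and> integrable lborel (\<rho> t) \<and> (\<integral>x. \<rho> t x \<partial>lborel) = 1)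
      \<and> (\<forall>t\<in>T. \<kappa> t > 0) \<and> solves_mass \<beta> \<pi> T \<rho> \<kappa>"
  then have S: "solves_SHK \<alpha> \<beta> \<pi> T \<rho>" and rpos: "\<And>t x. t \<in> T \<Longrightarrow> \<rho> t x > 0"
    and kpos: "\<And>t. t \<in> T \<Longrightarrow> \<kappa> t > 0" and M: "solves_mass \<beta> \<pi> T \<rho> \<kappa>" by auto
  have td: "\<And>t. t \<in> T \<Longrightarrow> twice_diff (\<rho> t)" using S unfolding solves_SHK_def by auto
  show "solves_HK \<alpha> \<beta> \<pi> T (\<lambda>t x. \<kappa> t * \<rho> t x)"
    unfolding solves_HK_def
  proof (intro conjI ballI allI)
    fix t assume t: "t \<in> T"
    show "twice_diff (\<lambda>x. \<kappa> t * \<rho> t x)" using twice_diff_scale[OF td[OF t]] .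
  next
    fix t x assume t: "t \<in> T"
    define R where "R = relent \<pi> (\<rho> t)"
    have dk: "(\<kappa> has_real_derivative (- \<beta> * \<kappa> t * ln (\<kappa> t) - \<beta> * \<kappa> t * R)) (at t)"
      using M t unfolding solves_mass_def R_def by auto
    have dr: "((\<lambda>s. \<rho> s x) has_real_derivative SHK_rhs \<alpha> \<beta> \<pi> (\<rho> t) x) (at t)"
      using S t unfolding solves_SHK_def by auto
    have d: "((\<lambda>s. \<kappa> s * \<rho> s x) has_real_derivative
        (- \<beta> * \<kappa> t * ln (\<kappa> t) - \<beta> * \<kappa> t * R) * \<rho> t x + SHK_rhs \<alpha> \<beta> \<pi> (\<rho> t) x * \<kappa> t) (at t)"
      using DERIV_mult[OF dk dr] .
    have lnk: "ln (\<kappa> t * \<rho> t x / \<pi> x) = ln (\<kappa> t) + ln (\<rho> t x / \<pi> x)"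
    proof -
      have "\<kappa> t * \<rho> t x / \<pi> x = \<kappa> t * (\<rho> t x / \<pi> x)" by simp
      moreover have "\<rho> t x / \<pi> x > 0" using rpos[OF t] pi_pos by simp
      ultimately show ?thesis using kpos[OF t] by (simp only: ln_mult_pos)
    qed
    have s1: "SHK_rhs \<alpha> \<beta> \<pi> (\<rho> t) x = \<alpha> * divergence (flux \<pi> (\<rho> t)) x - \<beta> * \<rho> t x * (ln (\<rho> t x / \<pi> x) - R)"
      by (simp only: SHK_rhs_def R_def)
    have h1: "HK_rhs \<alpha> \<beta> \<pi> (\<lambda>x. \<kappa> t * \<rho> t x) x = \<alpha> * divergence (flux \<pi> (\<lambda>x. \<kappa> t * \<rho> t x)) x
        - \<beta> * (\<kappa> t * \<rho> t x) * ln (\<kappa> t * \<rho> t x / \<pi> x)"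
      by (simp only: HK_rhs_def)
    have eq: "(- \<beta> * \<kappa> t * ln (\<kappa> t) - \<beta> * \<kappa> t * R) * \<rho> t x + SHK_rhs \<alpha> \<beta> \<pi> (\<rho> t) x * \<kappa> t
        = HK_rhs \<alpha> \<beta> \<pi> (\<lambda>x. \<kappa> t * \<rho> t x) x"
      unfolding s1 h1 div_flux_scale[OF td[OF t] pi_reg pi_pos] lnk by (rule alg3)
    show "((\<lambda>s. \<kappa> s * \<rho> s x) has_real_derivative HK_rhs \<alpha> \<beta> \<pi> (\<lambda>x. \<kappa> t * \<rho> t x) x) (at t)"
      using d unfolding eq .
  qed
qed

end
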